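(* Let $Q$ satisfy (Q1)–(Q4) and let $M>0$, $n_1:=k_1+3/2$. There is a constant $C>0$ such that $\mathcal H_C(f)\ge\mathcal P(f)-C(1+\mathcal P(f))^{n_1/3}$ for all $f\in\mathcal F_M$. In particular $h_M:=\inf_{\mathcal F_M}\mathcal H_C>-\infty$.
   Context: Standing assumptions on $Q$: $Q\in C^1([0,\infty))\cap C^2((0,\infty))$, $Q\ge0$, and there are constants $C_1,C_2>0$, $F_0>0$, $0<k_1,k_2,k_3<3/2$ with: (Q1) $Q(f)\ge C_1f^{1+1/k_1}$ for $f\ge F_0$; (Q2) $Q(f)\le C_2 f^{1+1/k_2}$ for $0\le f\le F_0$; (Q3) $Q(\lambda f)\ge\lambda^{1+1/k_3}Q(f)$ for $f\ge0$, $0\le\lambda\le1$; (Q4) $Q''(f)>0$ for $f>0$ and $Q'(0)=0$. For measurable $f=f(x,v)\ge0$ on $\mathbb R^3\times\mathbb R^3$: $\rho_f(x)=\int f(x,v)\,dv$, $U_f=-\rho_f*\frac1{|\cdot|}$, $E_{kin}(f)=\frac12\iint|v|^2f\,dv\,dx$, $E_{pot}(f)=-\frac1{8\pi}\int|\nabla U_f|^2dx=-\frac12\iint\frac{\rho_f(x)\rho_f(y)}{|x-y|}dx\,dy$, $\mathcal C(f)=\iint Q(f(x,v))\,dv\,dx$, $\mathcal P(f)=\mathcal C(f)+E_{kin}(f)$, $\mathcal H_C(f)=\mathcal P(f)+E_{pot}(f)$. For $M>0$, $\mathcal F_M=\{f\in L^1(\mathbb R^6): f\ge0,\ \iint f\,dv\,dx=M,\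 \mathcal P(f)<\infty\}$. *)

theory Defs
  imports "HOL-Analysis.Analysis"
begin

text \<open>All energies are defined as nonnegative (possibly infinite) integrals in ennreal;
  the potential energy is E_pot = - Epot_abs.\<close>

type_synonym pdens = "real^3 \<Rightarrow> real^3 \<Rightarrow> real"

definition rho :: "pdens \<Rightarrow> real^3 \<Rightarrow> ennreal" where
  "rho f x = (\<integral>\<^sup>+ v. ennreal (f x v) \<partial>lborel)"

definition Ekin :: "pdens \<Rightarrow> ennreal" where
  "Ekin f = (\<integral>\<^sup>+ z. ennreal ((1/2) * (norm (snd z))\<^sup>2 * f (fst z) (snd z)) \<partial>(lborel :: ((real^3) \<times> (real^3)) measure))"

definition Cas :: "(real \<Rightarrow> real) \<Rightarrow> pdens \<Rightarrow> ennreal" where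
  "Cas Q f = (\<integral>\<^sup>+ z. ennreal (Q (f (fst z) (snd z))) \<partial>(lborel :: ((real^3) \<times> (real^3)) measure))"

definition Pfun :: "(real \<Rightarrow> real) \<Rightarrow> pdens \<Rightarrow> ennreal" where
  "Pfun Q f = Cas Q f + Ekin f"

definition Epot_abs :: "pdens \<Rightarrow> ennreal" where
  "Epot_abs f = ennreal (1/2) * (\<integral>\<^sup>+ x. \<integral>\<^sup>+ y. rho f x * rho f y * ennreal (1 / norm (x - y)) \<partial>lborel \<partial>lborel)"

definition HC :: "(real \<Rightarrow> real) \<Rightarrow> pdens \<Rightarrow> ereal" where
  "HC Q f = enn2ereal (Pfun Q f) - enn2ereal (Epot_abs f)"

definition FM :: "(real \<Rightarrow> real) \<Rightarrow> real \<Rightarrow> pdens set" where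
  "FM Q M = {f. (\<forall>x v. 0 \<le> f x v)
      \<and> integrable (lborel :: ((real^3) \<times> (real^3)) measure) (\<lambda>z. f (fst z) (snd z))
      \<and> (\<integral> z. f (fst z) (snd z) \<partial>(lborel :: ((real^3) \<times> (real^3)) measure)) = M
      \<and> Pfun Q f < \<infinity>}"

end

theory Submission
  imports Defs
begin


lemma amgm3:
  fixes u v w aa bb :: real
  assumes "0\<le>u" "0\<le>v" "0\<le>w" "0<aa" "0<bb" "2*aa+bb=1"
  shows "u powr aa * v powr aa * w powr bb \<le> aa*u + aa* v + bb*w"
proof (cases "u = 0 \<or> v = 0 \<or> w = 0")
  case True
  then show ?thesis using assms by (auto intro!: add_nonneg_nonneg)
next
  case False
  then have pos: "u>0" "v>0" "w>0" using assms by auto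
  have "u powr aa * v powr aa = (sqrt (u* v)) powr (2*aa)"
    using pos by (simp add: sqrt_def root_powr_inverse powr_powr powr_mult)
  moreover have "(sqrt (u* v)) powr (2*aa) * w powr bb \<le> (2*aa) * sqrt (u* v) + bb * w"
    using Youngs_inequality_0[of "2*aa" bb "sqrt (u* v)" w] pos assms by auto
  moreover have "2 * sqrt (u* v) \<le> u + v"
  proof -
    have "(sqrt u - sqrt v)^2 \<ge> 0" by simp
    then show ?thesis using pos by (simp add: power2_eq_square algebra_simps real_sqrt_mult)
  qed
  moreover have "aa * (2 * sqrt (u* v)) \<le> aa * (u + v)"
    using calculation(3) assms by (intro mult_left_mono) auto
  ultimately show ?thesis by (simp add: algebra_simps)
qed

lemma pw_real:
  fixes a b k A B lam mu aa bb p r :: real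
  assumes "0\<le>a" "0\<le>b" "0\<le>k" "a powr p \<le> A" "b powr p \<le> B" "0<lam" "0<mu"
    "lam powr (2*aa) * mu powr bb = 1" "r*(2*aa) = 1" "p*(aa+bb) = 1" "0<aa" "0<bb" "2*aa+bb = 1"
  shows "a * b * k \<le> aa * (lam * k powr r * A) + aa * (lam * k powr r * B) + bb * (mu * A * B)"
proof -
  have p: "p > 0" using assms(10,11,12) by (smt (verit) mult_nonpos_nonneg)
  have A0: "A \<ge> 0" "B \<ge> 0" using assms(4,5) by (smt (verit) powr_ge_zero)+
  have ea: "a \<le> A powr (1/p)"
  proof -
    have "a = (a powr p) powr (1/p)" using p assms(1) by (simp add: powr_powr)
    also have "\<dots> \<le> A powr (1/p)" using assms(4) p by (intro powr_mono2) auto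
    finally show ?thesis .
  qed
  have eb: "b \<le> B powr (1/p)"
  proof -
    have "b = (b powr p) powr (1/p)" using p assms(2) by (simp add: powr_powr)
    also have "\<dots> \<le> B powr (1/p)" using assms(5) p by (intro powr_mono2) auto
    finally show ?thesis .
  qed
  have ip: "aa + bb = 1/p" using assms(10) p by (simp add: field_simps)
  have l2: "lam powr (2*aa) = lam powr aa * lam powr aa" by (simp add: powr_add[symmetric])
  have k2: "(k powr r) powr aa * (k powr r) powr aa = k"
    using assms by (simp add: powr_powr powr_add[symmetric] mult_ac)
  have Aa: "A powr aa * A powr bb = A powr (1/p)" "B powr aa * B powr bb = B powr (1/p)"
    using ip by (simp_all add: powr_add[symmetric])
  have "(lam * k powr r * A) powr aa * (lam * k powr r * B) powr aa * (mu * A * B) powr bb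
      = (lam powr aa * lam powr aa * mu powr bb) * ((k powr r) powr aa * (k powr r) powr aa) * (A powr aa * A powr bb) * (B powr aa * B powr bb)"
    using assms A0 by (simp add: powr_mult mult_ac)
  also have "\<dots> = k * A powr (1/p) * B powr (1/p)"
    using assms(8) l2 k2 Aa by simp
  finally have eq: "(lam * k powr r * A) powr aa * (lam * k powr r * B) powr aa * (mu * A * B) powr bb
      = k * A powr (1/p) * B powr (1/p)" .
  have "a * b * k \<le> A powr (1/p) * B powr (1/p) * k"
    using ea eb assms by (intro mult_mono) (auto intro: mult_mono)
  also have "\<dots> \<le> aa * (lam * k powr r * A) + aa * (lam * k powr r * B) + bb * (mu * A * B)"
    using amgm3[of "lam * k powr r * A" "lam * k powr r * B" "mu * A * B" aa bb] eq assms A0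
    by (simp add: mult_ac)
  finally show ?thesis .
qed

definition good :: "real \<Rightarrow> ennreal \<Rightarrow> ennreal \<Rightarrow> bool" where
  "good p a A \<longleftrightarrow> (a = \<infinity> \<longrightarrow> A = \<infinity>) \<and> (a \<noteq> \<infinity> \<longrightarrow> ennreal (enn2real a powr p) \<le> A)"

lemma pw_enn:
  fixes a b A B :: ennreal and k lam mu aa bb p r :: real
  assumes g: "good p a A" "good p b B" and k: "0\<le>k" and prm: "0<lam" "0<mu"
    "lam powr (2*aa) * mu powr bb = 1" "r*(2*aa) = 1" "p*(aa+bb) = 1" "0<aa" "0<bb" "2*aa+bb = 1"
  shows "a * b * ennreal k \<le> ennreal (aa * lam * k powr r) * A + ennreal (aa * lam * k powr r) * B
            + ennreal (bb * mu) * A * B"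
proof (cases "k = 0 \<or> a = 0 \<or> b = 0")
  case True then show ?thesis by auto
next
  case False
  then have kp: "k > 0" and a0: "a \<noteq> 0" and b0: "b \<noteq> 0" using k by auto
  have cpos: "aa * lam * k powr r > 0" using kp prm by simp
  show ?thesis
  proof (cases "A = \<infinity> \<or> B = \<infinity>")
    case True
    then have X: "ennreal (aa * lam * k powr r) * A + ennreal (aa * lam * k powr r) * B = \<infinity>"
    proof -
      have c0: "ennreal (aa * lam * k powr r) \<noteq> 0" using cpos by (simp only: ennreal_eq_0_iff not_le)
      from True show ?thesis
      proof
        assume "A = \<infinity>" then show ?thesis using c0 by (simp only: ennreal_mult_top if_False infinity_ennreal_def) simp
      next
        assume "B = \<infinity>" then show ?thesis using c0 by (simp only: ennreal_mult_top if_False infinity_ennreal_def) simp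
      qed
    qed
    show ?thesis by (subst X) simp
  next
    case False
    then have Af: "A \<noteq> \<infinity>" "B \<noteq> \<infinity>" by auto
    then have af: "a \<noteq> \<infinity>" "b \<noteq> \<infinity>" using g unfolding good_def by auto
    obtain a' where a': "a = ennreal a'" "0 \<le> a'" using af by (cases a) auto
    obtain b' where b': "b = ennreal b'" "0 \<le> b'" using af by (cases b) auto
    obtain A' where A': "A = ennreal A'" "0 \<le> A'" using Af by (cases A) auto
    obtain B' where B': "B = ennreal B'" "0 \<le> B'" using Af by (cases B) auto
    have ha: "a' powr p \<le> A'" using g(1) a' A' unfolding good_def by (simp add: ennreal_le_iff)
    have hb: "b' powr p \<le> B'" using g(2) b' B' unfolding good_def by (simp add: ennreal_le_iff)
    have main: "a' * b' * k \<le> aa * (lam * k powr r * A') + aa * (lam * k powr r * B') + bb * (mu * A' * B')"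
      by (rule pw_real[OF a'(2) b'(2) k ha hb prm])
    have "a * b * ennreal k = ennreal (a' * b' * k)" using a' b' k by (simp add: ennreal_mult)
    also have "\<dots> \<le> ennreal (aa * (lam * k powr r * A') + aa * (lam * k powr r * B') + bb * (mu * A' * B'))"
      using main by (rule ennreal_leI)
    also have "\<dots> = ennreal (aa * lam * k powr r) * A + ennreal (aa * lam * k powr r) * B
            + ennreal (bb * mu) * A * B"
    proof -
      have e: "aa * (lam * k powr r * A') + aa * (lam * k powr r * B') + bb * (mu * A' * B')
         = (aa * lam * k powr r) * A' + (aa * lam * k powr r) * B' + (bb * mu) * (A' * B')"
        by (simp add: algebra_simps)
      have nn: "0 \<le> (aa * lam * k powr r) * A'" "0 \<le> (aa * lam * k powr r) * B'" "0 \<le> (bb * mu) * (A' * B')"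
        using A' B' prm by auto
      have t1: "ennreal ((aa * lam * k powr r) * A') = ennreal (aa * lam * k powr r) * A"
        unfolding A'(1) by (rule ennreal_mult'') (rule A'(2))
      have t2: "ennreal ((aa * lam * k powr r) * B') = ennreal (aa * lam * k powr r) * B"
        unfolding B'(1) by (rule ennreal_mult'') (rule B'(2))
      have t3: "ennreal ((bb * mu) * (A' * B')) = ennreal (bb * mu) * A * B"
      proof -
        have "ennreal ((bb * mu) * (A' * B')) = ennreal (bb * mu) * ennreal (A' * B')"
          using A'(2) B'(2) by (intro ennreal_mult'') simp
        also have "ennreal (A' * B') = A * B" unfolding A'(1) B'(1) using A'(2) B'(2) by (rule ennreal_mult)
        finally show ?thesis by (simp only: mult.assoc)
      qed
      show ?thesis unfolding e using nn
        by (simp only: ennreal_plus add_nonneg_nonneg t1 t2 t3)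

    qed
    finally show ?thesis .
  qed
qed



definition c3 :: "real \<Rightarrow> real \<Rightarrow> real \<Rightarrow> real" where
  "c3 a b n = 2 * (4*b) powr (1/n) + ((4*a*(4*b) powr (-3/(2*n))) powr (1/(1 - 3/(2*n)))) powr (1/n)"

lemma c3_pos: "a > 0 \<Longrightarrow> b > 0 \<Longrightarrow> c3 a b n > 0"
  unfolding c3_def by (intro add_pos_nonneg) auto

lemma rho_real:
  fixes rh T a b n :: real
  assumes "0 \<le> rh" "0 \<le> T" "a > 0" "b > 0" "n > 3/2"
    and bnd: "\<And>R. R > 0 \<Longrightarrow> rh \<le> a * R powr 3 + b * R powr (2*n) + T / R powr 2"
  shows "rh powr (1 + 1/n) \<le> c3 a b n * (rh + T)"
proof (cases "rh = 0")
  case True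
  then show ?thesis using c3_pos[OF assms(3,4), of n] assms(2) by simp
next
  case False
  then have rp: "rh > 0" using assms(1) by simp
  have np: "n > 0" using assms(5) by simp
  define R where "R = (rh/(4*b)) powr (1/(2*n))"
  have Rp: "R > 0" using rp assms(4) R_def by simp
  have R2n: "R powr (2*n) = rh/(4*b)" using R_def rp assms(4) np by (simp add: powr_powr)
  have bR: "b * R powr (2*n) = rh/4" using R2n assms(4) by simp
  have R2: "R powr 2 = (rh/(4*b)) powr (1/n)" using R_def rp assms(4) np by (simp add: powr_powr)
  have R3: "R powr 3 = (rh/(4*b)) powr (3/(2*n))" using R_def rp assms(4) np by (simp add: powr_powr)
  have split: "rh powr (1 + 1/n) = rh * (rh/(4*b)) powr (1/n) * (4*b) powr (1/n)"
  proof -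
    have "(rh/(4*b)) powr (1/n) * (4*b) powr (1/n) = rh powr (1/n)"
      using rp assms(4) by (simp add: powr_divide)
    then show ?thesis using rp by (simp add: powr_add mult.assoc)
  qed
  have c3ge: "2 * (4*b) powr (1/n) \<le> c3 a b n"
    unfolding c3_def by simp
  show ?thesis
  proof (cases "a * R powr 3 \<le> rh/4")
    case True
    have "rh \<le> rh/4 + rh/4 + T / R powr 2" using bnd[OF Rp] True bR by linarith
    then have "rh / 2 \<le> T / R powr 2" by linarith
    then have "rh * R powr 2 \<le> 2 * T" using Rp by (simp add: field_simps)
    then have "rh powr (1 + 1/n) \<le> 2 * T * (4*b) powr (1/n)"
      unfolding split R2[symmetric] by (intro mult_right_mono) auto
    also have "\<dots> \<le> c3 a b n * T" using mult_right_mono[OF c3ge assms(2)] by (simp add: mult_ac)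
    also have "\<dots> \<le> c3 a b n * (rh + T)" using c3_pos[OF assms(3,4), of n] rp by simp
    finally show ?thesis .
  next
    case False
    define th where "th = 1 - 3/(2*n)"
    have "3/(2*n) < 1" using assms(5) by (simp add: field_simps)
    then have thp: "th > 0" using th_def by linarith
    define K where "K = 4*a*(4*b) powr (-3/(2*n))"
    have Kp: "K > 0" using K_def assms by simp
    have "rh < 4 * a * R powr 3" using False by simp
    also have "\<dots> = K * rh powr (3/(2*n))"
      unfolding R3 K_def using rp assms(4) by (simp add: powr_divide powr_minus divide_simps)
    finally have lt: "rh < K * rh powr (3/(2*n))" .
    have "rh = rh powr th * rh powr (3/(2*n))" using rp th_def by (simp add: powr_add[symmetric])
    with lt have "rh powr th < K" using rp by (smt (verit) mult_right_mono powr_gt_zero)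
    then have "(rh powr th) powr (1/th) < K powr (1/th)" using thp rp by (intro powr_less_mono2) auto
    then have rlt: "rh < K powr (1/th)" using thp rp by (simp add: powr_powr)
    have "rh powr (1 + 1/n) = rh * rh powr (1/n)" using rp by (simp add: powr_add)
    also have "\<dots> \<le> rh * (K powr (1/th)) powr (1/n)"
      using rlt rp np by (intro mult_left_mono powr_mono2) auto
    also have "(K powr (1/th)) powr (1/n) \<le> c3 a b n" unfolding c3_def K_def th_def by simp
    then have "rh * (K powr (1/th)) powr (1/n) \<le> rh * c3 a b n" using rp by (intro mult_left_mono) auto
    also have "\<dots> \<le> c3 a b n * (rh + T)" using c3_pos[OF assms(3,4), of n] assms(2)
      by (simp add: algebra_simps)
    finally show ?thesis .
  qed
qed



type_synonym v3 = "real^3"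

lemma transl:
  fixes h :: "v3 \<Rightarrow> ennreal" and x :: v3
  assumes [measurable]: "h \<in> borel_measurable borel"
  shows "(\<integral>\<^sup>+ y. h (x - y) \<partial>lborel) = (\<integral>\<^sup>+ z. h z \<partial>lborel)"
proof -
  have "(\<integral>\<^sup>+ z. h z \<partial>lborel) = (\<integral>\<^sup>+ z. h z \<partial>density (distr lborel borel (\<lambda>y. x + (-1) *\<^sub>R y)) (\<lambda>_. \<bar>-1::real\<bar>^DIM(v3)))"
    by (subst lborel_affine[of "-1" x]) auto
  also have "\<dots> = (\<integral>\<^sup>+ z. h z \<partial>distr lborel borel (\<lambda>y. x + (-1) *\<^sub>R y))"
    by (simp add: density_1)
  also have "\<dots> = (\<integral>\<^sup>+ y. h (x - y) \<partial>lborel)"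
    by (subst nn_integral_distr) auto
  finally show ?thesis ..
qed

definition c0 :: real where "c0 = measure lborel (ball (0::v3) 1)"

lemma c0_pos: "c0 > 0" unfolding c0_def by (rule content_ball_pos) simp

lemma emeasure_cball3: "t \<ge> 0 \<Longrightarrow> emeasure lborel (cball (0::v3) t) = ennreal (t^3 * c0)"
proof -
  assume t: "t \<ge> 0"
  have "emeasure lborel (cball (0::v3) t) = ennreal (measure lborel (cball (0::v3) t))"
    using emeasure_lborel_cball_finite[of "0::v3" t] by (subst emeasure_eq_ennreal_measure) auto
  also have "measure lborel (cball (0::v3) t) = t^3 * c0"
    unfolding content_cball_conv_ball c0_def using content_ball_conv_unit_ball[OF t, of "0::v3"] by simp
  finally show ?thesis .
qed

lemma emeasure_ball3: "t \<ge> 0 \<Longrightarrow> emeasure lborel (ball (0::v3) t) = ennreal (t^3 * c0)"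
proof -
  assume t: "t \<ge> 0"
  have "emeasure lborel (ball (0::v3) t) = ennreal (measure lborel (ball (0::v3) t))"
    using emeasure_lborel_ball_finite[of "0::v3" t] by (subst emeasure_eq_ennreal_measure) auto
  also have "measure lborel (ball (0::v3) t) = t^3 * c0"
    unfolding c0_def using content_ball_conv_unit_ball[OF t, of "0::v3"] by simp
  finally show ?thesis .
qed

definition Ks :: "real \<Rightarrow> real" where "Ks r = c0 * 2 powr r / (1 - 2 powr (r - 3))"

lemma Ks_pos: "r < 3 \<Longrightarrow> Ks r > 0"
  unfolding Ks_def using c0_pos powr_less_one[of 2 "r - 3"] by simp

lemma sing_alg:
  fixes d r :: real and j :: nat assumes "d > 0"
  shows "(d / 2^Suc j) powr (-r) * ((d / 2^j)^3 * c0) = c0 * 2 powr r * d powr (3 - r) * (2 powr (r - 3))^j"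
proof -
  have e1: "(2::real)^Suc j = 2 powr (real j + 1)" "(2::real)^j = 2 powr (real j)"
    by (simp_all add: powr_add powr_realpow)
  have e2: "(2 powr (r - 3))^j = 2 powr ((r - 3) * real j)"
    by (simp add: powr_realpow[symmetric] powr_powr)
  have e3: "(d / 2 powr real j)^3 = (d / 2 powr real j) powr 3" by (rule powr_numeral[symmetric]) (use assms in \<open>simp add: less_imp_le\<close>)
  have f1: "(d / 2 powr (real j + 1)) powr (-r) = d powr (-r) * 2 powr (r * (real j + 1))"
  proof -
    have "(d / 2 powr (real j + 1)) powr (-r) = d powr (-r) / (2 powr (real j + 1)) powr (-r)"
      using assms by (simp add: powr_divide)
    also have "(2 powr (real j + 1)) powr (-r) = 2 powr (- (r * (real j + 1)))"
      by (simp add: powr_powr mult.commute)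
    finally show ?thesis by (simp add: powr_minus divide_inverse)
  qed
  have f2: "(d / 2 powr (real j)) powr 3 = d powr 3 * 2 powr (- 3 * real j)"
  proof -
    have "(d / 2 powr (real j)) powr 3 = d powr 3 / (2 powr (real j)) powr 3"
      using assms by (simp add: powr_divide)
    also have "(2 powr (real j)) powr 3 = 2 powr (3 * real j)"
      by (simp add: powr_powr mult.commute)
    finally show ?thesis by (simp add: powr_minus divide_inverse)
  qed
  have f3: "d powr (3 - r) = d powr 3 * d powr (-r)"
    by (simp add: powr_add[symmetric])
  have f4: "2 powr (r * (real j + 1)) * 2 powr (- 3 * real j) = (2::real) powr r * 2 powr ((r - 3) * real j)"
    by (simp add: powr_add[symmetric] algebra_simps)
  have gen: "\<And>A B C E G H K::real. B * E = H * K \<Longrightarrow> A * B * (C * E * G) = G * H * (C * A) * K"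
  proof -
    fix A B C E G H K :: real assume h: "B * E = H * K"
    have "A * B * (C * E * G) = A * C * G * (B * E)" by (simp only: mult_ac)
    also have "\<dots> = A * C * G * (H * K)" by (simp only: h)
    also have "\<dots> = G * H * (C * A) * K" by (simp only: mult_ac)
    finally show "A * B * (C * E * G) = G * H * (C * A) * K" .
  qed
  show ?thesis unfolding e2 e1 e3 f1 f2 f3
    by (rule gen[OF f4])
qed

lemma sing_pt:
  fixes d r :: real and z :: v3 assumes "d > 0" "r > 0"
  shows "ennreal (indicator (ball 0 d) z * norm z powr (-r))
     \<le> (\<Sum>j. ennreal ((d / 2^Suc j) powr (-r)) * indicator (cball 0 (d / 2^j)) z)"
proof (cases "z \<in> ball 0 d \<and> z \<noteq> 0")
  case False then show ?thesis by (auto simp: indicator_def)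
next
  case True
  then have zp: "norm z > 0" "norm z < d" by auto
  define x where "x = d / norm z"
  have x1: "x > 1" using zp x_def by simp
  define j where "j = nat (floor (log 2 x))"
  have lg: "log 2 x > 0" using x1 by simp
  have jr: "real j = real_of_int (floor (log 2 x))" using lg j_def by simp
  have "2 powr (real j) \<le> 2 powr (log 2 x)" using jr by simp
  then have lo: "2^j \<le> x" using x1 by (simp add: powr_realpow[symmetric])
  have "log 2 x < real j + 1" using jr by linarith
  then have "2 powr (log 2 x) < 2 powr (real j + 1)" by simp
  then have hi: "x < 2^Suc j" using x1 by (simp add: powr_realpow powr_add)
  have inb: "norm z \<le> d / 2^j" using lo zp unfolding x_def by (simp add: field_simps)
  have gt: "d / 2^Suc j < norm z" using hi zp unfolding x_def by (simp add: field_simps)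
  have "norm z powr (-r) \<le> (d / 2^Suc j) powr (-r)"
    using gt assms by (intro powr_mono2') auto
  then have "ennreal (indicator (ball 0 d) z * norm z powr (-r))
      \<le> ennreal ((d / 2^Suc j) powr (-r)) * indicator (cball 0 (d / 2^j)) z"
    using True inb by (auto simp: indicator_def intro: ennreal_leI)
  also have "\<dots> \<le> (\<Sum>j. ennreal ((d / 2^Suc j) powr (-r)) * indicator (cball 0 (d / 2^j)) z)"
    using sum_le_suminf[OF summableI, of "{j}"] by simp
  finally show ?thesis .
qed

lemma sing_int:
  fixes d r :: real assumes "d > 0" "0 < r" "r < 3"
  shows "(\<integral>\<^sup>+ z. ennreal (indicator (ball (0::v3) d) z * norm z powr (-r)) \<partial>lborel)
      \<le> ennreal (Ks r * d powr (3 - r))"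
proof -
  define q where "q = (2::real) powr (r - 3)"
  have q: "0 \<le> q" "q < 1" using assms q_def powr_less_one[of 2 "r - 3"] by auto
  have "(\<integral>\<^sup>+ z. ennreal (indicator (ball (0::v3) d) z * norm z powr (-r)) \<partial>lborel)
     \<le> (\<integral>\<^sup>+ z. (\<Sum>j. ennreal ((d / 2^Suc j) powr (-r)) * indicator (cball (0::v3) (d / 2^j)) z) \<partial>lborel)"
    by (rule nn_integral_mono) (rule sing_pt[OF assms(1,2)])
  also have "\<dots> = (\<Sum>j. \<integral>\<^sup>+ z. ennreal ((d / 2^Suc j) powr (-r)) * indicator (cball (0::v3) (d / 2^j)) z \<partial>lborel)"
  proof (rule nn_integral_suminf)
    fix j :: nat
    show "(\<lambda>z. ennreal ((d / 2^Suc j) powr (-r)) * indicator (cball (0::v3) (d / 2^j)) z) \<in> borel_measurable lborel"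
      by (intro borel_measurable_times_ennreal borel_measurable_indicator borel_measurable_const)
         (simp add: sets_lborel borel_closed)
  qed
  also have "\<dots> = (\<Sum>j. ennreal (c0 * 2 powr r * d powr (3 - r) * q^j))"
  proof (intro suminf_cong)
    fix j :: nat
    have "(\<integral>\<^sup>+ z. ennreal ((d / 2^Suc j) powr (-r)) * indicator (cball (0::v3) (d / 2^j)) z \<partial>lborel)
        = ennreal ((d / 2^Suc j) powr (-r)) * ennreal ((d / 2^j)^3 * c0)"
      apply (subst nn_integral_cmult_indicator)
      using assms by (auto simp: sets_lborel borel_closed emeasure_cball3)
    also have "\<dots> = ennreal (c0 * 2 powr r * d powr (3 - r) * q^j)"
      unfolding q_def sing_alg[OF assms(1), symmetric] using c0_pos assms
      by (simp add: ennreal_mult)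
    finally show "(\<integral>\<^sup>+ z. ennreal ((d / 2^Suc j) powr (-r)) * indicator (cball (0::v3) (d / 2^j)) z \<partial>lborel)
        = ennreal (c0 * 2 powr r * d powr (3 - r) * q^j)" .
  qed
  also have "\<dots> = ennreal (\<Sum>j. c0 * 2 powr r * d powr (3 - r) * q^j)"
    using q c0_pos by (intro suminf_ennreal2 summable_mult summable_geometric) auto
  also have "(\<Sum>j. c0 * 2 powr r * d powr (3 - r) * q^j) = Ks r * d powr (3 - r)"
    using q unfolding Ks_def q_def by (simp add: suminf_mult suminf_geometric field_simps)
  finally show ?thesis by simp
qed



definition Kr :: "real \<Rightarrow> real \<Rightarrow> v3 \<Rightarrow> ennreal" where
  "Kr d r z = ennreal (if norm z < d then norm z powr (-r) else 0)"

lemma Kr_meas[measurable]: "Kr d r \<in> borel_measurable borel"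
  unfolding Kr_def by measurable

lemma Kr_int: assumes "d > 0" "0 < r" "r < 3"
  shows "(\<integral>\<^sup>+ z. Kr d r z \<partial>lborel) \<le> ennreal (Ks r * d powr (3 - r))"
proof -
  have "Kr d r z = ennreal (indicator (ball (0::v3) d) z * norm z powr (-r))" for z
    unfolding Kr_def by (simp add: indicator_def)
  then show ?thesis using sing_int[OF assms] by simp
qed

lemma Kr_sym: "Kr d r (x - y) = Kr d r (y - x)"
  unfolding Kr_def by (simp add: norm_minus_commute)

lemma kernel_split:
  fixes z :: v3 and d :: real assumes "d > 0"
  shows "1 / norm z \<le> (if norm z < d then 1 / norm z else 0) + 1/d"
proof (cases "norm z < d")
  case True then show ?thesis using assms by simp
next
  case False
  then have nz: "norm z \<ge> d" by simp
  have "norm z * d > 0" using nz assms by (intro mult_pos_pos) auto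
  then have "1 / norm z \<le> 1 / d" using nz assms by (intro divide_left_mono) auto
  then show ?thesis using False by simp
qed

lemma kappa_powr:
  fixes z :: v3 assumes "r > 0"
  shows "(if norm z < d then 1 / norm z else 0) powr r = (if norm z < d then norm z powr (-r) else 0)"
proof (cases "z = 0")
  case True then show ?thesis by simp
next
  case False then show ?thesis by (simp add: powr_minus_divide powr_divide)
qed

lemma pw_full:
  fixes a b A B :: ennreal and z :: v3 and d lam mu aa bb p r :: real
  assumes g: "good p a A" "good p b B" and d: "d > 0" and rp: "r > 0" and prm: "0<lam" "0<mu"
    "lam powr (2*aa) * mu powr bb = 1" "r*(2*aa) = 1" "p*(aa+bb) = 1" "0<aa" "0<bb" "2*aa+bb = 1"
  shows "a * b * ennreal (1 / norm z) \<le> ennreal (aa*lam) * (A * Kr d r z) + ennreal (aa*lam) * (B * Kr d r z)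
      + ennreal (bb*mu) * (A * B) + ennreal (1/d) * (a * b)"
proof -
  define ka where "ka = (if norm z < d then 1 / norm z else 0)"
  have ka0: "0 \<le> ka" unfolding ka_def by simp
  have "ennreal (1 / norm z) \<le> ennreal (ka + 1/d)"
    unfolding ka_def by (rule ennreal_leI) (rule kernel_split[OF d])
  also have "\<dots> = ennreal ka + ennreal (1/d)" using ka0 d by simp
  finally have "a * b * ennreal (1 / norm z) \<le> a * b * (ennreal ka + ennreal (1/d))"
    by (rule mult_left_mono) simp
  also have "\<dots> = a * b * ennreal ka + ennreal (1/d) * (a * b)" by (simp add: algebra_simps)
  also have "a * b * ennreal ka \<le> ennreal (aa * lam * ka powr r) * A + ennreal (aa * lam * ka powr r) * B
            + ennreal (bb * mu) * A * B"
    by (rule pw_enn[OF g ka0 prm])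
  also have "ennreal (aa * lam * ka powr r) = ennreal (aa*lam) * Kr d r z"
    unfolding ka_def kappa_powr[OF rp] Kr_def using prm by (simp add: ennreal_mult)
  finally show ?thesis by (simp add: algebra_simps)
qed

lemma Kr_transl: "(\<integral>\<^sup>+ y. Kr d r (x - y) \<partial>lborel) = (\<integral>\<^sup>+ z. Kr d r z \<partial>lborel)"
  by (rule transl) measurable

lemma Kr_transl2: "(\<integral>\<^sup>+ x. Kr d r (x - y) \<partial>lborel) = (\<integral>\<^sup>+ z. Kr d r z \<partial>lborel)"
  by (subst Kr_sym) (rule Kr_transl)

lemma double_bound:
  fixes rh G :: "v3 \<Rightarrow> ennreal" and d lam mu aa bb p r :: real
  assumes mr[measurable]: "rh \<in> borel_measurable lborel" and mG[measurable]: "G \<in> borel_measurable lborel"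
    and g: "\<And>x. good p (rh x) (G x)" and d: "d > 0" and rp: "r > 0" and prm: "0<lam" "0<mu"
    "lam powr (2*aa) * mu powr bb = 1" "r*(2*aa) = 1" "p*(aa+bb) = 1" "0<aa" "0<bb" "2*aa+bb = 1"
  shows "(\<integral>\<^sup>+ x. \<integral>\<^sup>+ y. rh x * rh y * ennreal (1 / norm (x - y)) \<partial>lborel \<partial>lborel)
    \<le> ennreal (aa*lam) * ((\<integral>\<^sup>+ x. G x \<partial>lborel) * (\<integral>\<^sup>+ z. Kr d r z \<partial>lborel))
     + ennreal (aa*lam) * ((\<integral>\<^sup>+ x. G x \<partial>lborel) * (\<integral>\<^sup>+ z. Kr d r z \<partial>lborel))
     + ennreal (bb*mu) * ((\<integral>\<^sup>+ x. G x \<partial>lborel) * (\<integral>\<^sup>+ x. G x \<partial>lborel))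
     + ennreal (1/d) * ((\<integral>\<^sup>+ x. rh x \<partial>lborel) * (\<integral>\<^sup>+ x. rh x \<partial>lborel))"
    (is "_ \<le> ?R")
proof -
  let ?IK = "\<integral>\<^sup>+ z. Kr d r z \<partial>lborel"
  let ?IG = "\<integral>\<^sup>+ x. G x \<partial>lborel"
  let ?Ir = "\<integral>\<^sup>+ x. rh x \<partial>lborel"
  have "(\<integral>\<^sup>+ x. \<integral>\<^sup>+ y. rh x * rh y * ennreal (1 / norm (x - y)) \<partial>lborel \<partial>lborel)
     \<le> (\<integral>\<^sup>+ x. \<integral>\<^sup>+ y. ennreal (aa*lam) * (G x * Kr d r (x - y)) + ennreal (aa*lam) * (G y * Kr d r (x - y))
      + ennreal (bb*mu) * (G x * G y) + ennreal (1/d) * (rh x * rh y) \<partial>lborel \<partial>lborel)"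
    by (intro nn_integral_mono pw_full[OF g g d rp prm])
  also have "\<dots> = (\<integral>\<^sup>+ x. ennreal (aa*lam) * (G x * ?IK) + ennreal (aa*lam) * (\<integral>\<^sup>+ y. G y * Kr d r (x - y) \<partial>lborel)
      + ennreal (bb*mu) * (G x * ?IG) + ennreal (1/d) * (rh x * ?Ir) \<partial>lborel)"
  proof (rule nn_integral_cong)
    fix x :: v3
    have "(\<integral>\<^sup>+ y. ennreal (aa*lam) * (G x * Kr d r (x - y)) + ennreal (aa*lam) * (G y * Kr d r (x - y))
      + ennreal (bb*mu) * (G x * G y) + ennreal (1/d) * (rh x * rh y) \<partial>lborel)
      = (\<integral>\<^sup>+ y. ennreal (aa*lam) * (G x * Kr d r (x - y)) \<partial>lborel) + (\<integral>\<^sup>+ y. ennreal (aa*lam) * (G y * Kr d r (x - y)) \<partial>lborel)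
      + (\<integral>\<^sup>+ y. ennreal (bb*mu) * (G x * G y) \<partial>lborel) + (\<integral>\<^sup>+ y. ennreal (1/d) * (rh x * rh y) \<partial>lborel)"
      by (simp add: nn_integral_add)
    also have "\<dots> = ennreal (aa*lam) * (G x * ?IK) + ennreal (aa*lam) * (\<integral>\<^sup>+ y. G y * Kr d r (x - y) \<partial>lborel)
      + ennreal (bb*mu) * (G x * ?IG) + ennreal (1/d) * (rh x * ?Ir)"
      by (simp add: nn_integral_cmult Kr_transl)
    finally show "(\<integral>\<^sup>+ y. ennreal (aa*lam) * (G x * Kr d r (x - y)) + ennreal (aa*lam) * (G y * Kr d r (x - y))
      + ennreal (bb*mu) * (G x * G y) + ennreal (1/d) * (rh x * rh y) \<partial>lborel)
      = ennreal (aa*lam) * (G x * ?IK) + ennreal (aa*lam) * (\<integral>\<^sup>+ y. G y * Kr d r (x - y) \<partial>lborel)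
      + ennreal (bb*mu) * (G x * ?IG) + ennreal (1/d) * (rh x * ?Ir)" .
  qed
  also have "\<dots> = ennreal (aa*lam) * (?IG * ?IK) + ennreal (aa*lam) * (\<integral>\<^sup>+ x. \<integral>\<^sup>+ y. G y * Kr d r (x - y) \<partial>lborel \<partial>lborel)
      + ennreal (bb*mu) * (?IG * ?IG) + ennreal (1/d) * (?Ir * ?Ir)"
    by (simp add: nn_integral_add nn_integral_cmult nn_integral_multc)
  also have "(\<integral>\<^sup>+ x. \<integral>\<^sup>+ y. G y * Kr d r (x - y) \<partial>lborel \<partial>lborel) = ?IG * ?IK"
  proof -
    have "(\<integral>\<^sup>+ x. \<integral>\<^sup>+ y. G y * Kr d r (x - y) \<partial>lborel \<partial>lborel) = (\<integral>\<^sup>+ y. \<integral>\<^sup>+ x. G y * Kr d r (x - y) \<partial>lborel \<partial>lborel)"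
      by (rule lborel_pair.Fubini'[symmetric]) measurable
    also have "\<dots> = (\<integral>\<^sup>+ y. G y * ?IK \<partial>lborel)"
      by (simp add: nn_integral_cmult Kr_transl2)
    also have "\<dots> = ?IG * ?IK" by (simp add: nn_integral_multc)
    finally show ?thesis .
  qed
  finally show ?thesis .
qed



lemma exps:
  fixes n X W K M :: real
  assumes n: "n > 1" and X: "X > 0"
  defines "g \<equiv> n/3" and "aa \<equiv> 1/(n+1)" and "bb \<equiv> (n-1)/(n+1)" and "r \<equiv> (n+1)/2"
  shows "(X powr ((2-g)*bb/(2*aa))) powr (2*aa) * (X powr (g-2)) powr bb = 1"
    and "aa * X powr ((2-g)*bb/(2*aa)) * (W*X) * (K * (X powr (-g)) powr (3-r)) * 2
         + bb * X powr (g-2) * (W*X)^2 + (1 / X powr (-g)) * M^2 = (2*aa*W*K + bb*W^2 + M^2) * X powr g"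
proof -
  have aap: "aa > 0" using n aa_def by simp
  show "(X powr ((2-g)*bb/(2*aa))) powr (2*aa) * (X powr (g-2)) powr bb = 1"
    using aap X by (simp add: powr_powr powr_add[symmetric] field_simps)
  have E: "(2-g)*bb/(2*aa) + 1 - g*(3-r) = g"
    unfolding g_def aa_def bb_def r_def using n by (simp add: field_simps)
  have t1: "X powr ((2-g)*bb/(2*aa)) * X * (X powr (-g)) powr (3-r) = X powr g"
  proof -
    have "X powr ((2-g)*bb/(2*aa)) * X * (X powr (-g)) powr (3-r) = X powr ((2-g)*bb/(2*aa) + 1 + (-g)*(3-r))"
    proof -
      have "X powr ((2-g)*bb/(2*aa) + 1 + (-g)*(3-r)) = X powr ((2-g)*bb/(2*aa)) * X powr 1 * X powr ((-g)*(3-r))"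
        by (simp only: powr_add)
      moreover have "(X powr (-g)) powr (3-r) = X powr ((-g)*(3-r))" by (simp only: powr_powr)
      ultimately show ?thesis using X by simp
    qed
    also have "(2-g)*bb/(2*aa) + 1 + (-g)*(3-r) = g" using E by simp
    finally show ?thesis .
  qed
  have t2: "X powr (g-2) * X^2 = X powr g"
  proof -
    have "X^2 = X powr 2" using X by (simp add: powr_numeral)
    then have "X powr (g-2) * X^2 = X powr (g - 2 + 2)" by (simp only: powr_add)
    then show ?thesis by simp
  qed
  have t3: "1 / X powr (-g) = X powr g" by (simp add: powr_minus divide_inverse)
  have "aa * X powr ((2-g)*bb/(2*aa)) * (W*X) * (K * (X powr (-g)) powr (3-r)) * 2
      = 2*aa*W*K * (X powr ((2-g)*bb/(2*aa)) * X * (X powr (-g)) powr (3-r))" by (simp add: algebra_simps)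
  moreover have "bb * X powr (g-2) * (W*X)^2 = bb*W^2 * (X powr (g-2) * X^2)" by (simp add: algebra_simps power2_eq_square)
  ultimately show "aa * X powr ((2-g)*bb/(2*aa)) * (W*X) * (K * (X powr (-g)) powr (3-r)) * 2
         + bb * X powr (g-2) * (W*X)^2 + (1 / X powr (-g)) * M^2 = (2*aa*W*K + bb*W^2 + M^2) * X powr g"
    unfolding t3 using t1 t2 by (simp add: algebra_simps)
qed



lemma sublin:
  fixes C g t :: real
  assumes C: "C > 0" and g: "0 < g" "g < 1" and t: "t \<ge> 0"
  shows "t - C * (1 + t) powr g \<ge> - (C * (max 1 ((2*C) powr (1/(1-g)))) powr g + 1)"
proof -
  define T0 where "T0 = max 1 ((2*C) powr (1/(1-g)))"
  define X where "X = 1 + t"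
  have Xp: "X \<ge> 1" using t X_def by simp
  have T0p: "T0 \<ge> 1" unfolding T0_def by simp
  show ?thesis
  proof (cases "X \<le> T0")
    case True
    then have "X powr g \<le> T0 powr g" using Xp g by (intro powr_mono2) auto
    then have "C * X powr g \<le> C * T0 powr g" using C by simp
    then show ?thesis using t unfolding X_def T0_def by linarith
  next
    case False
    then have "X \<ge> (2*C) powr (1/(1-g))" unfolding T0_def by simp
    then have "X powr (1-g) \<ge> ((2*C) powr (1/(1-g))) powr (1-g)" using g C by (intro powr_mono2) auto
    also have "((2*C) powr (1/(1-g))) powr (1-g) = 2*C" using g C by (simp add: powr_powr)
    finally have h: "2*C \<le> X powr (1-g)" .
    have "X = X powr g * X powr (1-g)" using Xp by (simp add: powr_add[symmetric])
    then have "2 * (C * X powr g) \<le> X" using h Xp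
      by (metis mult.assoc mult.commute mult_left_mono powr_ge_zero)
    then have "2 * (C * (1 + t) powr g) \<le> 1 + t" unfolding X_def by simp
    then have "t - C * (1 + t) powr g \<ge> -1" using t by linarith
    moreover have "0 \<le> C * (max 1 ((2*C) powr (1/(1-g)))) powr g" using C by simp
    ultimately show ?thesis by linarith
  qed
qed



definition Wc :: "real \<Rightarrow> real \<Rightarrow> real \<Rightarrow> real \<Rightarrow> real" where
  "Wc C1 F0 k M = c3 (F0*c0) c0 (k+3/2) * (M + 1/C1 + 2)"

definition Cst :: "real \<Rightarrow> real \<Rightarrow> real \<Rightarrow> real \<Rightarrow> real" where
  "Cst C1 F0 k M = (2*(1/(k+3/2+1))*Wc C1 F0 k M*Ks ((k+3/2+1)/2) + ((k+3/2-1)/(k+3/2+1))*(Wc C1 F0 k M)^2 + M^2)/2"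


context
  fixes Q :: "real \<Rightarrow> real" and C1 F0 k :: real and f :: "v3 \<Rightarrow> v3 \<Rightarrow> real"
  assumes C1: "C1 > 0" and F0: "F0 > 0" and k: "k > 0"
    and Qnn: "\<And>s. s \<ge> 0 \<Longrightarrow> Q s \<ge> 0" and Q1: "\<And>s. s \<ge> F0 \<Longrightarrow> Q s \<ge> C1 * s powr (1 + 1/k)"
    and Qc: "continuous_on {0..} Q"
    and fnn: "\<And>x v. f x v \<ge> 0"
    and fm: "(\<lambda>z. f (fst z) (snd z)) \<in> borel_measurable (lborel :: (v3 \<times> v3) measure)"
begin

lemma fm2[measurable]: "(\<lambda>(x, v). f x v) \<in> borel_measurable (lborel \<Otimes>\<^sub>M lborel)"
proof -
  have "(\<lambda>(x, v). f x v) = (\<lambda>z. f (fst z) (snd z))" by auto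
  then show ?thesis using fm by (simp add: lborel_prod)
qed

lemma fmv[measurable]: "(\<lambda>v. f x v) \<in> borel_measurable lborel"
proof -
  have "(\<lambda>v. (x, v)) \<in> measurable lborel (lborel \<Otimes>\<^sub>M lborel)" by simp
  from measurable_compose[OF this fm2] show ?thesis by simp
qed

definition Qp :: "real \<Rightarrow> real" where "Qp s = Q (max 0 s)"

lemma Qp_meas[measurable]: "Qp \<in> borel_measurable borel"
proof -
  have "continuous_on UNIV (\<lambda>s. Q (max 0 s))"
    by (rule continuous_on_compose2[OF Qc]) (auto intro!: continuous_intros)
  then show ?thesis unfolding Qp_def by (rule borel_measurable_continuous_onI)
qed

lemma Qf: "Q (f x v) = Qp (f x v)" unfolding Qp_def using fnn by (simp add: max_absorb2)

lemma Qfm2[measurable]: "(\<lambda>(x, v). ennreal (Q (f x v))) \<in> borel_measurable (lborel \<Otimes>\<^sub>M lborel)"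
  unfolding Qf by measurable

lemma Qfmv[measurable]: "(\<lambda>v. ennreal (Q (f x v))) \<in> borel_measurable lborel"
  unfolding Qf by measurable

lemma pt_v:
  fixes y R :: real and v :: v3
  assumes y: "0 \<le> y" and R: "R > 0"
  shows "y \<le> indicator (ball (0::v3) R) v * (F0 + R powr (2*k)) + R powr (-2) / C1 * Q y + R powr (-2) * (norm v^2 * y)"
proof -
  have t2: "0 \<le> R powr (-2) / C1 * Q y" using Qnn[OF y] C1 by simp
  have t3: "0 \<le> R powr (-2) * (norm v^2 * y)" using y by simp
  show ?thesis
  proof (cases "v \<in> ball 0 R")
    case False
    then have "R \<le> norm v" by simp
    then have "R^2 \<le> norm v^2" using R by (intro power_mono) auto
    then have "R powr 2 \<le> norm v^2" using R by (simp add: powr_realpow)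
    then have "y * R powr 2 \<le> norm v^2 * y" using y by (simp add: mult_left_mono mult.commute)
    then have "y \<le> R powr (-2) * (norm v^2 * y)" using R by (simp add: powr_minus field_simps)
    then show ?thesis using False t2 by simp
  next
    case True
    define s where "s = R powr (2*k)"
    have sp: "s > 0" using R s_def by simp
    show ?thesis
    proof (cases "y \<le> F0 + s")
      case True
      then show ?thesis using \<open>v \<in> ball 0 R\<close> t2 t3 s_def by simp
    next
      case False
      then have yF: "y \<ge> F0" "y > s" using F0 sp by auto
      have yp: "y > 0" using yF sp by simp
      have Rs: "R powr (-2) = s powr (-1/k)" unfolding s_def using R k by (simp add: powr_powr)
      have "y \<le> y * (y/s) powr (1/k)"
      proof -
        have "1 \<le> (y/s) powr (1/k)" using yF sp k by (intro ge_one_powr_ge_zero) (auto simp: field_simps)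
        then show ?thesis using yp by simp
      qed
      also have "\<dots> = s powr (-1/k) * y powr (1 + 1/k)"
      proof -
        have yk: "y powr (1 + 1/k) = y * y powr (1/k)" using yp by (simp add: powr_add)
        show ?thesis unfolding yk using yp sp by (simp add: powr_divide powr_minus divide_simps)
      qed
      also have "\<dots> \<le> s powr (-1/k) * (Q y / C1)"
        using Q1[OF yF(1)] C1 by (intro mult_left_mono) (auto simp: field_simps)
      also have "\<dots> = R powr (-2) / C1 * Q y" using Rs by simp
      finally have yy: "y \<le> R powr (-2) / C1 * Q y" .
      have i1: "indicator (ball (0::v3) R) v = (1::real)" using \<open>v \<in> ball 0 R\<close> by simp
      have "0 \<le> R powr (2*k)" by simp
      then show ?thesis unfolding i1 mult.left_neutral using yy t3 F0 by linarith
    qed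
  qed
qed

definition qd :: "v3 \<Rightarrow> ennreal" where "qd x = (\<integral>\<^sup>+ v. ennreal (Q (f x v)) \<partial>lborel)"
definition ed :: "v3 \<Rightarrow> ennreal" where "ed x = (\<integral>\<^sup>+ v. ennreal (norm v ^ 2 * f x v) \<partial>lborel)"
definition Tt :: "v3 \<Rightarrow> ennreal" where "Tt x = ennreal (1 / C1) * qd x + ed x"

lemma rho_bnd:
  assumes R: "R > 0"
  shows "rho f x \<le> ennreal ((F0 + R powr (2*k)) * (R^3 * c0)) + ennreal (R powr (-2)) * Tt x"
proof -
  define s where "s = R powr (2*k)"
  have s0: "0 \<le> F0 + s" using F0 s_def by simp
  have "rho f x = (\<integral>\<^sup>+ v. ennreal (f x v) \<partial>lborel)" unfolding rho_def ..
  also have "\<dots> \<le> (\<integral>\<^sup>+ v. ennreal (F0 + s) * indicator (ball (0::v3) R) v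
        + ennreal (R powr (-2) / C1) * ennreal (Q (f x v)) + ennreal (R powr (-2)) * ennreal (norm v ^ 2 * f x v) \<partial>lborel)"
  proof (rule nn_integral_mono)
    fix v :: v3
    have nq: "0 \<le> Q (f x v)" using Qnn fnn by auto
    have "ennreal (f x v) \<le> ennreal (indicator (ball (0::v3) R) v * (F0 + s) + R powr (-2) / C1 * Q (f x v) + R powr (-2) * (norm v^2 * f x v))"
      using pt_v[OF fnn[of x v] R, of v] unfolding s_def by (rule ennreal_leI)
    also have "\<dots> = ennreal (F0 + s) * indicator (ball (0::v3) R) v
        + ennreal (R powr (-2) / C1) * ennreal (Q (f x v)) + ennreal (R powr (-2)) * ennreal (norm v ^ 2 * f x v)"
    proof -
      have n1: "0 \<le> indicator (ball (0::v3) R) v * (F0 + s)" using s0 by simp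
      have n2: "0 \<le> R powr (-2) / C1 * Q (f x v)" using nq C1 by simp
      have n3: "0 \<le> R powr (-2) * (norm v^2 * f x v)" using fnn[of x v] by simp
      have e1: "ennreal (indicator (ball (0::v3) R) v * (F0 + s)) = ennreal (F0 + s) * indicator (ball (0::v3) R) v"
        by (simp split: split_indicator)
      have e2: "ennreal (R powr (-2) / C1 * Q (f x v)) = ennreal (R powr (-2) / C1) * ennreal (Q (f x v))"
        using nq C1 by (intro ennreal_mult) auto
      have e3: "ennreal (R powr (-2) * (norm v^2 * f x v)) = ennreal (R powr (-2)) * ennreal (norm v ^ 2 * f x v)"
        using fnn[of x v] by (intro ennreal_mult) auto
      show ?thesis using n1 n2 n3 by (simp only: ennreal_plus add_nonneg_nonneg e1 e2 e3)
    qed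
    finally show "ennreal (f x v) \<le> ennreal (F0 + s) * indicator (ball (0::v3) R) v
        + ennreal (R powr (-2) / C1) * ennreal (Q (f x v)) + ennreal (R powr (-2)) * ennreal (norm v ^ 2 * f x v)" .
  qed
  also have "\<dots> = ennreal (F0 + s) * emeasure lborel (ball (0::v3) R) + ennreal (R powr (-2) / C1) * qd x
        + ennreal (R powr (-2)) * ed x"
  proof -
    have m1: "(\<lambda>v. ennreal (F0 + s) * indicator (ball (0::v3) R) v) \<in> borel_measurable lborel"
      by (intro borel_measurable_times_ennreal borel_measurable_indicator borel_measurable_const)
         (simp add: sets_lborel borel_open)
    have m2: "(\<lambda>v. ennreal (R powr (-2) / C1) * ennreal (Q (f x v))) \<in> borel_measurable lborel"
      by measurable
    have m3: "(\<lambda>v. ennreal (R powr (-2)) * ennreal (norm v ^ 2 * f x v)) \<in> borel_measurable lborel"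
      by measurable
    have "(\<integral>\<^sup>+ v. ennreal (F0 + s) * indicator (ball (0::v3) R) v
        + ennreal (R powr (-2) / C1) * ennreal (Q (f x v)) + ennreal (R powr (-2)) * ennreal (norm v ^ 2 * f x v) \<partial>lborel)
      = (\<integral>\<^sup>+ v. ennreal (F0 + s) * indicator (ball (0::v3) R) v \<partial>lborel)
        + (\<integral>\<^sup>+ v. ennreal (R powr (-2) / C1) * ennreal (Q (f x v)) \<partial>lborel)
        + (\<integral>\<^sup>+ v. ennreal (R powr (-2)) * ennreal (norm v ^ 2 * f x v) \<partial>lborel)"
      using m1 m2 m3 by (simp add: nn_integral_add)
    also have "\<dots> = ennreal (F0 + s) * emeasure lborel (ball (0::v3) R) + ennreal (R powr (-2) / C1) * qd x
        + ennreal (R powr (-2)) * ed x"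
      unfolding qd_def ed_def
      by (simp add: nn_integral_cmult nn_integral_cmult_indicator sets_lborel borel_open)
    finally show ?thesis .
  qed
  also have "\<dots> = ennreal ((F0 + s) * (R^3 * c0)) + ennreal (R powr (-2)) * Tt x"
  proof -
    have em: "ennreal (R powr (-2) / C1) = ennreal (R powr (-2)) * ennreal (1/C1)"
      using C1 by (simp add: ennreal_mult[symmetric] divide_inverse)
    have eb: "ennreal (F0 + s) * emeasure lborel (ball (0::v3) R) = ennreal ((F0 + s) * (R^3 * c0))"
      using R s0 c0_pos by (simp add: emeasure_ball3 ennreal_mult)
    show ?thesis unfolding Tt_def em eb by (simp add: distrib_left mult.assoc)
  qed
  finally show ?thesis unfolding s_def .
qed

lemma good_rho:
  "good (1 + 1/(k+3/2)) (rho f x) (ennreal (c3 (F0*c0) c0 (k+3/2)) * (rho f x + Tt x))"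
proof -
  let ?c = "c3 (F0*c0) c0 (k+3/2)"
  have cp: "?c > 0" using c3_pos F0 c0_pos by simp
  have cne: "ennreal ?c \<noteq> 0" using cp by simp
  have b1: "rho f x \<le> ennreal ((F0 + 1) * c0) + Tt x"
    using rho_bnd[of 1 x] by simp
  show ?thesis
  proof (cases "Tt x = \<infinity>")
    case True
    then have X: "ennreal ?c * (rho f x + Tt x) = \<infinity>" using cne by (simp add: ennreal_mult_eq_top_iff)
    show ?thesis unfolding good_def X by simp
  next
    case False
    then have rf: "rho f x \<noteq> \<infinity>" using b1 by (auto simp: top_unique)
    obtain rr where rr: "rho f x = ennreal rr" "0 \<le> rr" using rf by (cases "rho f x") auto
    obtain tt where tt: "Tt x = ennreal tt" "0 \<le> tt" using False by (cases "Tt x") auto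
    have bnd: "rr \<le> (F0*c0) * R powr 3 + c0 * R powr (2*(k+3/2)) + tt / R powr 2" if R: "R > 0" for R
    proof -
      have "ennreal rr \<le> ennreal ((F0 + R powr (2*k)) * (R^3 * c0)) + ennreal (R powr (-2)) * ennreal tt"
        using rho_bnd[OF R, of x] rr tt by simp
      also have "\<dots> = ennreal ((F0 + R powr (2*k)) * (R^3 * c0) + R powr (-2) * tt)"
        using R F0 c0_pos tt by (simp add: ennreal_mult)
      finally have "rr \<le> (F0 + R powr (2*k)) * (R^3 * c0) + R powr (-2) * tt"
        using R F0 c0_pos tt by (subst (asm) ennreal_le_iff) auto
      also have "\<dots> = (F0*c0) * R powr 3 + c0 * R powr (2*(k+3/2)) + tt / R powr 2"
      proof -
        have "R^3 = R powr 3" using R by (simp add: powr_numeral)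
        moreover have "R powr (2*(k+3/2)) = R powr (2*k) * R powr 3" by (simp add: powr_add[symmetric] algebra_simps)
        moreover have "R powr (-2) * tt = tt / R powr 2" by (simp add: powr_minus divide_inverse)
        ultimately show ?thesis by (simp add: algebra_simps)
      qed
      finally show ?thesis .
    qed
    have "rr powr (1 + 1/(k+3/2)) \<le> ?c * (rr + tt)"
      by (rule rho_real[OF rr(2) tt(2) _ _ _ bnd]) (use F0 c0_pos k in auto)
    then have "ennreal (rr powr (1 + 1/(k+3/2))) \<le> ennreal ?c * (rho f x + Tt x)"
    proof -
      have "ennreal (rr powr (1 + 1/(k+3/2))) \<le> ennreal (?c * (rr + tt))" by (rule ennreal_leI) fact
      also have "\<dots> = ennreal ?c * (rho f x + Tt x)"
        unfolding rr tt using cp rr(2) tt(2) by (simp add: ennreal_mult)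
      finally show ?thesis .
    qed
    then show ?thesis unfolding good_def using rr by simp
  qed
qed

lemma rho_meas[measurable]: "rho f \<in> borel_measurable lborel"
  unfolding rho_def[abs_def] by measurable

lemma qd_meas[measurable]: "qd \<in> borel_measurable lborel"
  unfolding qd_def[abs_def] by measurable

lemma ed_meas[measurable]: "ed \<in> borel_measurable lborel"
  unfolding ed_def[abs_def] by measurable

lemma Tt_meas[measurable]: "Tt \<in> borel_measurable lborel"
  unfolding Tt_def[abs_def] by measurable

lemma iter_int:
  assumes [measurable]: "(\<lambda>(x, v). g x v) \<in> borel_measurable (lborel \<Otimes>\<^sub>M lborel)"
  shows "(\<integral>\<^sup>+ x. \<integral>\<^sup>+ v. g x v \<partial>lborel \<partial>(lborel::v3 measure)) = (\<integral>\<^sup>+ z. g (fst z) (snd z) \<partial>(lborel :: (v3 \<times> v3) measure))"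
proof -
  have "(\<integral>\<^sup>+ x. \<integral>\<^sup>+ v. g x v \<partial>lborel \<partial>(lborel::v3 measure)) = integral\<^sup>N (lborel \<Otimes>\<^sub>M lborel) (\<lambda>(x, v). g x v)"
    using lborel.nn_integral_fst[of "\<lambda>(x, v). g x v" "lborel :: v3 measure"] by simp
  also have "\<dots> = (\<integral>\<^sup>+ z. g (fst z) (snd z) \<partial>(lborel :: (v3 \<times> v3) measure))"
    by (simp add: lborel_prod case_prod_beta')
  finally show ?thesis .
qed

lemma int_rho: "(\<integral>\<^sup>+ x. rho f x \<partial>lborel) = (\<integral>\<^sup>+ z. ennreal (f (fst z) (snd z)) \<partial>(lborel :: (v3 \<times> v3) measure))"
  unfolding rho_def by (rule iter_int) measurable

lemma int_qd: "(\<integral>\<^sup>+ x. qd x \<partial>lborel) = Cas Q f"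
  unfolding qd_def Cas_def by (rule iter_int) measurable

lemma int_ed: "(\<integral>\<^sup>+ x. ed x \<partial>lborel) = 2 * Ekin f"
proof -
  have "(\<integral>\<^sup>+ x. ed x \<partial>lborel) = (\<integral>\<^sup>+ z. ennreal (norm (snd z) ^ 2 * f (fst z) (snd z)) \<partial>(lborel :: (v3 \<times> v3) measure))"
    unfolding ed_def by (rule iter_int) measurable
  also have "\<dots> = (\<integral>\<^sup>+ z. 2 * ennreal ((1/2) * (norm (snd z))\<^sup>2 * f (fst z) (snd z)) \<partial>(lborel :: (v3 \<times> v3) measure))"
  proof (intro nn_integral_cong)
    fix z :: "v3 \<times> v3"
    have t0: "0 \<le> (1/2) * (norm (snd z))\<^sup>2 * f (fst z) (snd z)" using fnn by simp
    have "ennreal (2 * ((1/2) * (norm (snd z))\<^sup>2 * f (fst z) (snd z))) = ennreal 2 * ennreal ((1/2) * (norm (snd z))\<^sup>2 * f (fst z) (snd z))"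
      using t0 by (intro ennreal_mult) auto
    then show "ennreal (norm (snd z) ^ 2 * f (fst z) (snd z)) = 2 * ennreal ((1/2) * (norm (snd z))\<^sup>2 * f (fst z) (snd z))"
      by simp
  qed
  also have "\<dots> = 2 * Ekin f"
  proof -
    have fb: "(\<lambda>z::v3\<times>v3. f (fst z) (snd z)) \<in> borel_measurable borel" using fm by simp
    have c1: "(\<lambda>z::v3\<times>v3. (1/2) * (norm (snd z))\<^sup>2) \<in> borel_measurable borel"
      by (intro borel_measurable_continuous_onI continuous_intros)
    have "(\<lambda>z::v3\<times>v3. ennreal ((1/2) * (norm (snd z))\<^sup>2 * f (fst z) (snd z))) \<in> borel_measurable borel"
      by (intro measurable_compose[OF _ measurable_ennreal] borel_measurable_times c1 fb)
    then have mm: "(\<lambda>z::v3\<times>v3. ennreal ((1/2) * (norm (snd z))\<^sup>2 * f (fst z) (snd z))) \<in> borel_measurable lborel"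
      by simp
    show ?thesis unfolding Ekin_def by (rule nn_integral_cmult[OF mm])
  qed
  finally show ?thesis .
qed

lemma epot_bound:
  assumes kk: "k < 3/2" and Mp: "M > 0"
    and intf: "integrable lborel (\<lambda>z::v3\<times>v3. f (fst z) (snd z))"
    and intM: "(\<integral> z. f (fst z) (snd z) \<partial>(lborel :: (v3 \<times> v3) measure)) = M"
    and Pf: "Pfun Q f < \<infinity>"
  shows "Epot_abs f \<le> ennreal (Cst C1 F0 k M * (1 + enn2real (Pfun Q f)) powr ((k + 3/2)/3))"
proof -
  define n where "n = k + 3/2"
  define r where "r = (n+1)/2"
  define aa where "aa = 1/(n+1)"
  define bb where "bb = (n-1)/(n+1)"
  define g where "g = n/3"
  define p where "p = 1 + 1/n"
  define c where "c = c3 (F0*c0) c0 n"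
  define W where "W = c * (M + 1/C1 + 2)"
  define Pr where "Pr = enn2real (Pfun Q f)"
  define X where "X = 1 + Pr"
  define lam where "lam = X powr ((2-g)*bb/(2*aa))"
  define mu where "mu = X powr (g-2)"
  define d where "d = X powr (-g)"
  define G where "G x = ennreal c * (rho f x + Tt x)" for x
  have n1: "n > 3/2" "n < 3" using k kk n_def by auto
  have cp: "c > 0" unfolding c_def using c3_pos F0 c0_pos by simp
  have Wp: "W > 0" unfolding W_def using cp Mp C1 by (intro mult_pos_pos add_pos_pos) auto
  have PfE: "Pfun Q f = ennreal Pr" unfolding Pr_def using Pf by (cases "Pfun Q f") auto
  have Pr0: "Pr \<ge> 0" unfolding Pr_def by simp
  have Xp: "X > 0" "X \<ge> 1" unfolding X_def using Pr0 by auto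
  have prm: "0<lam" "0<mu" "lam powr (2*aa) * mu powr bb = 1" "r*(2*aa) = 1" "p*(aa+bb) = 1" "0<aa" "0<bb" "2*aa+bb = 1"
  proof -
    have n0: "n + 1 > 0" "n > 0" using n1 by auto
    have "lam powr (2*aa) * mu powr bb = 1"
      unfolding lam_def mu_def aa_def bb_def g_def using exps(1)[of n X] n1 Xp by simp
    moreover have "r*(2*aa) = 1" unfolding r_def aa_def using n0 by (simp add: field_simps)
    moreover have "p*(aa+bb) = 1"
    proof -
      have "n + n*n \<noteq> 0" using n0 by (smt (verit) mult_pos_pos)
      then show ?thesis unfolding p_def aa_def bb_def using n0 by (simp add: field_simps)
    qed
    moreover have "2*aa+bb = 1"
    proof -
      have "1 + (n*n + n*2) \<noteq> 0" using n0 by (smt (verit) mult_pos_pos)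
      then show ?thesis unfolding aa_def bb_def using n0 by (simp add: field_simps)
    qed
    moreover have "0<aa" "0<bb" unfolding aa_def bb_def using n0 n1 by auto
    moreover have "0<lam" "0<mu" unfolding lam_def mu_def using Xp by auto
    ultimately show "0<lam" "0<mu" "lam powr (2*aa) * mu powr bb = 1" "r*(2*aa) = 1" "p*(aa+bb) = 1" "0<aa" "0<bb" "2*aa+bb = 1"
      by auto
  qed
  have dp: "d > 0" unfolding d_def using Xp by simp
  have rp: "r > 0" "r < 3" unfolding r_def using n1 by auto
  have gG: "good p (rho f x) (G x)" for x
    unfolding p_def G_def c_def n_def by (rule good_rho)
  have Gm: "G \<in> borel_measurable lborel" unfolding G_def[abs_def] by measurable
  have DB: "(\<integral>\<^sup>+ x. \<integral>\<^sup>+ y. rho f x * rho f y * ennreal (1 / norm (x - y)) \<partial>lborel \<partial>lborel)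
    \<le> ennreal (aa*lam) * ((\<integral>\<^sup>+ x. G x \<partial>lborel) * (\<integral>\<^sup>+ z. Kr d r z \<partial>lborel))
     + ennreal (aa*lam) * ((\<integral>\<^sup>+ x. G x \<partial>lborel) * (\<integral>\<^sup>+ z. Kr d r z \<partial>lborel))
     + ennreal (bb*mu) * ((\<integral>\<^sup>+ x. G x \<partial>lborel) * (\<integral>\<^sup>+ x. G x \<partial>lborel))
     + ennreal (1/d) * ((\<integral>\<^sup>+ x. rho f x \<partial>lborel) * (\<integral>\<^sup>+ x. rho f x \<partial>lborel))"
    by (rule double_bound[OF rho_meas Gm gG dp rp(1) prm])
  have IR: "(\<integral>\<^sup>+ x. rho f x \<partial>lborel) = ennreal M"
    unfolding int_rho using intM fnn
    by (subst nn_integral_eq_integral[OF intf]) auto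
  have IK: "(\<integral>\<^sup>+ z. Kr d r z \<partial>lborel) \<le> ennreal (Ks r * d powr (3 - r))"
    by (rule Kr_int[OF dp rp])
  have ITt: "(\<integral>\<^sup>+ x. Tt x \<partial>lborel) = ennreal (1/C1) * Cas Q f + 2 * Ekin f"
    unfolding Tt_def[abs_def] by (simp add: nn_integral_add nn_integral_cmult int_qd int_ed)
  have CasP: "Cas Q f \<le> ennreal Pr" and EkP: "Ekin f \<le> ennreal Pr"
    using PfE unfolding Pfun_def by (metis add_increasing2 zero_le order_refl, metis add_increasing zero_le order_refl)
  have "(\<integral>\<^sup>+ x. Tt x \<partial>lborel) \<le> ennreal (1/C1) * ennreal Pr + 2 * ennreal Pr"
    unfolding ITt by (intro add_mono mult_left_mono CasP EkP) auto
  also have "\<dots> = ennreal ((1/C1 + 2) * Pr)"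
  proof -
    have "ennreal (2 * Pr) = ennreal 2 * ennreal Pr" using Pr0 by (intro ennreal_mult) auto
    then have two: "2 * ennreal Pr = ennreal (2 * Pr)" by simp
    show ?thesis using C1 Pr0 unfolding two by (simp add: ennreal_mult[symmetric] distrib_right)
  qed
  finally have ITt2: "(\<integral>\<^sup>+ x. Tt x \<partial>lborel) \<le> ennreal ((1/C1 + 2) * Pr)" .
  have "(\<integral>\<^sup>+ x. G x \<partial>lborel) = ennreal c * ((\<integral>\<^sup>+ x. rho f x \<partial>lborel) + (\<integral>\<^sup>+ x. Tt x \<partial>lborel))"
    unfolding G_def by (simp add: nn_integral_add nn_integral_cmult)
  also have "\<dots> \<le> ennreal c * (ennreal M + ennreal ((1/C1 + 2) * Pr))"
    unfolding IR by (intro mult_left_mono add_mono ITt2) auto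
  also have "\<dots> = ennreal (c * (M + (1/C1 + 2) * Pr))"
  proof -
    have q0: "0 \<le> (1/C1 + 2) * Pr" using C1 Pr0 by simp
    have a: "ennreal M + ennreal ((1/C1+2)*Pr) = ennreal (M + (1/C1+2)*Pr)"
      using Mp q0 by (intro ennreal_plus[symmetric]) auto
    show ?thesis unfolding a using cp Mp q0 by (intro ennreal_mult[symmetric]) auto
  qed
  also have "\<dots> \<le> ennreal (W * X)"
  proof (rule ennreal_leI)
    have e: "(M + 1/C1 + 2) * (1 + Pr) = M + (1/C1 + 2) * Pr + (M*Pr + 1/C1 + 2)" by (simp add: algebra_simps add_divide_distrib)
    have "0 \<le> M*Pr + 1/C1 + 2" using Mp C1 Pr0 by simp
    then have "M + (1/C1 + 2) * Pr \<le> (M + 1/C1 + 2) * (1 + Pr)" unfolding e by linarith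
    then show "c * (M + (1/C1 + 2) * Pr) \<le> W * X" unfolding W_def X_def using cp
      by (simp add: mult.assoc)
  qed
  finally have IG: "(\<integral>\<^sup>+ x. G x \<partial>lborel) \<le> ennreal (W * X)" .
  have IGK: "(\<integral>\<^sup>+ x. G x \<partial>lborel) * (\<integral>\<^sup>+ z. Kr d r z \<partial>lborel) \<le> ennreal ((W * X) * (Ks r * d powr (3 - r)))"
    using mult_mono[OF IG IK] Wp Xp Ks_pos[OF rp(2)] by (simp add: ennreal_mult)
  have IGG: "(\<integral>\<^sup>+ x. G x \<partial>lborel) * (\<integral>\<^sup>+ x. G x \<partial>lborel) \<le> ennreal ((W * X)^2)"
    using mult_mono[OF IG IG] Wp Xp by (simp add: ennreal_mult power2_eq_square)
  have IRR: "(\<integral>\<^sup>+ x. rho f x \<partial>lborel) * (\<integral>\<^sup>+ x. rho f x \<partial>lborel) = ennreal (M^2)"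
    unfolding IR using Mp by (simp add: ennreal_mult power2_eq_square)
  define tot where "tot = aa * lam * ((W*X) * (Ks r * d powr (3-r))) + aa * lam * ((W*X) * (Ks r * d powr (3-r))) + bb * mu * (W*X)^2 + (1/d) * M^2"
  have "(\<integral>\<^sup>+ x. \<integral>\<^sup>+ y. rho f x * rho f y * ennreal (1 / norm (x - y)) \<partial>lborel \<partial>lborel)
     \<le> ennreal (aa*lam) * ennreal ((W * X) * (Ks r * d powr (3 - r))) + ennreal (aa*lam) * ennreal ((W * X) * (Ks r * d powr (3 - r)))
       + ennreal (bb*mu) * ennreal ((W * X)^2) + ennreal (1/d) * ennreal (M^2)"
    using DB
  proof (rule order_trans)
    have m1: "ennreal (aa*lam) * ((\<integral>\<^sup>+ x. G x \<partial>lborel) * (\<integral>\<^sup>+ z. Kr d r z \<partial>lborel))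
        \<le> ennreal (aa*lam) * ennreal ((W * X) * (Ks r * d powr (3 - r)))"
      by (rule mult_left_mono[OF IGK]) simp
    have m2: "ennreal (bb*mu) * ((\<integral>\<^sup>+ x. G x \<partial>lborel) * (\<integral>\<^sup>+ x. G x \<partial>lborel)) \<le> ennreal (bb*mu) * ennreal ((W * X)^2)"
      by (rule mult_left_mono[OF IGG]) simp
    show "ennreal (aa*lam) * ((\<integral>\<^sup>+ x. G x \<partial>lborel) * (\<integral>\<^sup>+ z. Kr d r z \<partial>lborel))
     + ennreal (aa*lam) * ((\<integral>\<^sup>+ x. G x \<partial>lborel) * (\<integral>\<^sup>+ z. Kr d r z \<partial>lborel))
     + ennreal (bb*mu) * ((\<integral>\<^sup>+ x. G x \<partial>lborel) * (\<integral>\<^sup>+ x. G x \<partial>lborel))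
     + ennreal (1/d) * ((\<integral>\<^sup>+ x. rho f x \<partial>lborel) * (\<integral>\<^sup>+ x. rho f x \<partial>lborel))
     \<le> ennreal (aa*lam) * ennreal ((W * X) * (Ks r * d powr (3 - r))) + ennreal (aa*lam) * ennreal ((W * X) * (Ks r * d powr (3 - r)))
       + ennreal (bb*mu) * ennreal ((W * X)^2) + ennreal (1/d) * ennreal (M^2)"
      unfolding IRR by (intro add_mono m1 m2 order_refl)
  qed
  also have "\<dots> = ennreal tot"
  proof -
    have A1: "0 \<le> (W * X) * (Ks r * d powr (3 - r))" using Wp Xp Ks_pos[OF rp(2)] by simp
    have e1: "ennreal (aa*lam) * ennreal ((W * X) * (Ks r * d powr (3 - r))) = ennreal (aa * lam * ((W*X) * (Ks r * d powr (3-r))))"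
      using prm A1 by (intro ennreal_mult[symmetric]) auto
    have e2: "ennreal (bb*mu) * ennreal ((W * X)^2) = ennreal (bb * mu * (W*X)^2)"
      using prm by (intro ennreal_mult[symmetric]) auto
    have e3: "ennreal (1/d) * ennreal (M^2) = ennreal ((1/d) * M^2)"
      using dp by (intro ennreal_mult[symmetric]) auto
    have n1: "0 \<le> aa * lam * ((W*X) * (Ks r * d powr (3-r)))" "0 \<le> bb * mu * (W*X)^2" "0 \<le> (1/d) * M^2"
      using prm A1 dp by auto
    show ?thesis unfolding e1 e2 e3 tot_def using n1
      by (simp only: ennreal_plus add_nonneg_nonneg)
  qed
  finally have DB2: "(\<integral>\<^sup>+ x. \<integral>\<^sup>+ y. rho f x * rho f y * ennreal (1 / norm (x - y)) \<partial>lborel \<partial>lborel) \<le> ennreal tot" .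
  have tot2: "tot = aa * lam * (W*X) * (Ks r * d powr (3-r)) * 2 + bb * mu * (W*X)^2 + (1/d) * M^2"
    unfolding tot_def by (simp add: algebra_simps)
  have tot_eq: "tot = (2*aa*W*Ks r + bb*W^2 + M^2) * X powr g"
    unfolding tot2 lam_def mu_def d_def aa_def bb_def r_def g_def
    using exps(2)[of n X W "Ks r" M] n1 Xp unfolding r_def by simp
  have "Epot_abs f = ennreal (1/2) * (\<integral>\<^sup>+ x. \<integral>\<^sup>+ y. rho f x * rho f y * ennreal (1 / norm (x - y)) \<partial>lborel \<partial>lborel)"
    unfolding Epot_abs_def ..
  also have "\<dots> \<le> ennreal (1/2) * ennreal tot" using DB2 by (rule mult_left_mono) simp
  also have "\<dots> = ennreal (tot / 2)"
  proof -
    have "ennreal (1/2 * tot) = ennreal (1/2) * ennreal tot" by (rule ennreal_mult') simp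
    then show ?thesis by simp
  qed
  also have "tot / 2 = Cst C1 F0 k M * (1 + enn2real (Pfun Q f)) powr ((k + 3/2)/3)"
    unfolding tot_eq Cst_def Wc_def X_def Pr_def g_def n_def aa_def bb_def r_def W_def c_def by simp
  finally show ?thesis .
qed

end


theorem lemma2:
  fixes Q Q' Q'' :: "real \<Rightarrow> real" and C1 C2 F0 k1 k2 k3 M :: real
  assumes Q_C1: "\<And>s. s \<ge> 0 \<Longrightarrow> (Q has_real_derivative Q' s) (at s within {0..})"
      and Q'_cont: "continuous_on {0..} Q'"
      and Q_C2: "\<And>s. s > 0 \<Longrightarrow> (Q' has_real_derivative Q'' s) (at s)"
      and Q''_cont: "continuous_on {0<..} Q''"
      and Q_nonneg: "\<And>s. s \<ge> 0 \<Longrightarrow> Q s \<ge> 0"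
      and constants: "C1 > 0" "C2 > 0" "F0 > 0"
        "0 < k1" "k1 < 3/2" "0 < k2" "k2 < 3/2" "0 < k3" "k3 < 3/2"
      and Q1: "\<And>s. s \<ge> F0 \<Longrightarrow> Q s \<ge> C1 * s powr (1 + 1/k1)"
      and Q2: "\<And>s. 0 \<le> s \<Longrightarrow> s \<le> F0 \<Longrightarrow> Q s \<le> C2 * s powr (1 + 1/k2)"
      and Q3: "\<And>s lam. s \<ge> 0 \<Longrightarrow> 0 \<le> lam \<Longrightarrow> lam \<le> 1 \<Longrightarrow> Q (lam * s) \<ge> lam powr (1 + 1/k3) * Q s"
      and Q4: "\<And>s. s > 0 \<Longrightarrow> Q'' s > 0" "Q' 0 = 0"
      and M: "M > 0"
  shows "(\<exists>C>0. \<forall>f \<in> FM Q M.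
            HC Q f \<ge> ereal (enn2real (Pfun Q f) - C * (1 + enn2real (Pfun Q f)) powr ((k1 + 3/2) / 3)))
         \<and> (INF f \<in> FM Q M. HC Q f) > - \<infinity>"
  proof -
  have Qc: "continuous_on {0..} Q"
    by (rule DERIV_continuous_on) (use Q_C1 in auto)
  define C where "C = Cst C1 F0 k1 M"
  define g where "g = (k1 + 3/2) / 3"
  have Cp: "C > 0"
  proof -
    have W: "Wc C1 F0 k1 M > 0" unfolding Wc_def
      using c3_pos[of "F0*c0" c0 "k1+3/2"] constants c0_pos M by (intro mult_pos_pos add_pos_pos) auto
    have a1: "0 \<le> 2*(1/(k1+3/2+1))*Wc C1 F0 k1 M*Ks ((k1+3/2+1)/2)"
      using W Ks_pos[of "(k1+3/2+1)/2"] constants by simp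
    have a2: "0 \<le> ((k1+3/2-1)/(k1+3/2+1))*(Wc C1 F0 k1 M)^2" using constants by simp
    have a3: "M^2 > 0" using M by simp
    have "0 < 2*(1/(k1+3/2+1))*Wc C1 F0 k1 M*Ks ((k1+3/2+1)/2) + ((k1+3/2-1)/(k1+3/2+1))*(Wc C1 F0 k1 M)^2 + M^2"
      using a1 a2 a3 by linarith
    then show ?thesis unfolding C_def Cst_def by (simp only: half_gt_zero_iff)
  qed
  have key: "HC Q f \<ge> ereal (enn2real (Pfun Q f) - C * (1 + enn2real (Pfun Q f)) powr g)"
    if fF: "f \<in> FM Q M" for f
  proof -
    have fnn: "\<And>x v. 0 \<le> f x v" and intf: "integrable lborel (\<lambda>z::(real^3)\<times>(real^3). f (fst z) (snd z))"
      and intM: "(\<integral> z. f (fst z) (snd z) \<partial>(lborel :: ((real^3) \<times> (real^3)) measure)) = M"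
      and Pf: "Pfun Q f < \<infinity>"
      using fF unfolding FM_def by auto
    have fm: "(\<lambda>z. f (fst z) (snd z)) \<in> borel_measurable (lborel :: ((real^3) \<times> (real^3)) measure)"
      using intf by (rule borel_measurable_integrable)
    have E: "Epot_abs f \<le> ennreal (C * (1 + enn2real (Pfun Q f)) powr g)"
      unfolding C_def g_def
      by (rule epot_bound[OF constants(1) constants(3) constants(4) Q_nonneg Q1 Qc fnn fm constants(5) M intf intM Pf])
    define Pr where "Pr = enn2real (Pfun Q f)"
    define B where "B = C * (1 + Pr) powr g"
    have PfE: "Pfun Q f = ennreal Pr" unfolding Pr_def using Pf by (cases "Pfun Q f") auto
    have Pr0: "Pr \<ge> 0" unfolding Pr_def by simp
    have Ef: "Epot_abs f \<noteq> \<infinity>" using E by (auto simp: top_unique)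
    obtain e where e: "Epot_abs f = ennreal e" "0 \<le> e" using Ef by (cases "Epot_abs f") auto
    have eB: "e \<le> B" using E e Cp unfolding B_def Pr_def by (simp add: ennreal_le_iff)
    have "HC Q f = ereal Pr - ereal e" unfolding HC_def PfE e(1) using Pr0 e(2) by simp
    also have "\<dots> = ereal (Pr - e)" by simp
    finally have "HC Q f = ereal (Pr - e)" .
    then show ?thesis using eB unfolding B_def Pr_def by simp
  qed
  have g01: "0 < g" "g < 1" unfolding g_def using constants by auto
  define D where "D = C * (max 1 ((2*C) powr (1/(1-g)))) powr g + 1"
  have low: "HC Q f \<ge> ereal (- D)" if fF: "f \<in> FM Q M" for f
  proof -
    have "ereal (- D) \<le> ereal (enn2real (Pfun Q f) - C * (1 + enn2real (Pfun Q f)) powr g)"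
      unfolding D_def using sublin[OF Cp g01, of "enn2real (Pfun Q f)"] by simp
    also have "\<dots> \<le> HC Q f" by (rule key[OF fF])
    finally show ?thesis .
  qed
  have "ereal (- D) \<le> (INF f \<in> FM Q M. HC Q f)"
    by (rule INF_greatest) (rule low)
  have inf: "(INF f \<in> FM Q M. HC Q f) > - \<infinity>"
  proof -
    have "- \<infinity> < ereal (- D)" by simp
    then show ?thesis using \<open>ereal (- D) \<le> (INF f \<in> FM Q M. HC Q f)\<close> by (rule less_le_trans)
  qed
  show ?thesis using Cp key inf unfolding g_def by blast
qed

end
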